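(* Let $S_0,\dots,S_{k-1}$ be martingales on $2^{<\omega}$ and let $c>\max_{j<k}S_j(\bot)+\frac12\sum_{j<k}\sqrt{\mathrm{Var}(S_j\mid\bot)}$. Then there exists a martingale $S^*$ with $S^*(\bot)<c$ such that $S^*(\rho)>\max_{j<k}S_j(\rho)$ for all $\rho\in2^{<\omega}$. Moreover, $S^*$ can be taken bounded if each $S_j$ is bounded.
   Context: A martingale is a function $S:2^{<\omega}\to\mathbb{R}^{\ge0}$ with $2S(\rho)=S(\rho0)+S(\rho1)$ for all $\rho$; $\bot$ is the empty string. For a martingale $S$ and $\rho\in2^{<\omega}$, $\mathrm{Var}(S\mid\rho)=\lim_{t\to\infty}2^{-(t-|\rho|)}\sum_{\sigma\in 2^t,\ \sigma\succeq\rho}(S(\sigma)-S(\rho))^2$. A function is bounded if its range is a bounded subset of $\mathbb{R}$. *)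

theory Defs
  imports "HOL-Analysis.Analysis" "HOL-Library.Sublist"
begin

text \<open>Binary strings 2^{<omega} are bool lists; rho0 = rho @ [False], rho1 = rho @ [True];
  the empty string bot is [].\<close>

definition martingale :: "(bool list \<Rightarrow> real) \<Rightarrow> bool" where
  "martingale S \<longleftrightarrow>
     (\<forall>\<rho>. S \<rho> \<ge> 0) \<and> (\<forall>\<rho>. 2 * S \<rho> = S (\<rho> @ [False]) + S (\<rho> @ [True]))"

definition var_seq :: "(bool list \<Rightarrow> real) \<Rightarrow> bool list \<Rightarrow> nat \<Rightarrow> real" where
  "var_seq S \<rho> t =
     (\<Sum>\<sigma>\<in>{\<sigma>. length \<sigma> = t \<and> prefix \<rho> \<sigma>}. (S \<sigma> - S \<rho>)^2) / 2 ^ (t - length \<rho>)"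

definition Var :: "(bool list \<Rightarrow> real) \<Rightarrow> bool list \<Rightarrow> real" where
  "Var S \<rho> = lim (var_seq S \<rho>)"

end

theory Submission
  imports Defs
begin

fun avg :: "(bool list \<Rightarrow> real) \<Rightarrow> bool list \<Rightarrow> nat \<Rightarrow> real" where
  "avg g \<rho> 0 = g \<rho>"
| "avg g \<rho> (Suc n) = (avg g (\<rho> @ [False]) n + avg g (\<rho> @ [True]) n) / 2"

lemma avg_mono: "(\<And>\<sigma>. g \<sigma> \<le> h \<sigma>) \<Longrightarrow> avg g \<rho> n \<le> avg h \<rho> n"
proof (induction n arbitrary: \<rho>)
  case 0 then show ?case by simp
next
  case (Suc n)
  have "avg g (\<rho> @ [False]) n \<le> avg h (\<rho> @ [False]) n" "avg g (\<rho> @ [True]) n \<le> avg h (\<rho> @ [True]) n"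
    using Suc by auto
  then show ?case by simp
qed

lemma avg_add: "avg (\<lambda>\<sigma>. g \<sigma> + h \<sigma>) \<rho> n = avg g \<rho> n + avg h \<rho> n"
  by (induction n arbitrary: \<rho>) (simp_all add: field_simps)

lemma avg_diff: "avg (\<lambda>\<sigma>. g \<sigma> - h \<sigma>) \<rho> n = avg g \<rho> n - avg h \<rho> n"
proof (induction n arbitrary: \<rho>)
  case (Suc n) show ?case by (simp only: avg.simps Suc.IH) (simp add: field_simps)
qed simp

lemma avg_const: "avg (\<lambda>\<sigma>. a) \<rho> n = a"
  by (induction n arbitrary: \<rho>) simp_all

lemma avg_cmult: "avg (\<lambda>\<sigma>. a * g \<sigma>) \<rho> n = a * avg g \<rho> n"
  by (induction n arbitrary: \<rho>) (simp_all add: field_simps)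

lemma avg_divide: "avg (\<lambda>\<sigma>. g \<sigma> / a) \<rho> n = avg g \<rho> n / a"
proof (induction n arbitrary: \<rho>)
  case (Suc n) show ?case by (simp only: avg.simps Suc.IH) (cases "a = 0"; simp add: field_simps)
qed simp

lemma sq_sub: "2 * (s::real) = u + v \<Longrightarrow> 2 * (s - a)^2 \<le> (u - a)^2 + (v - a)^2"
proof -
  assume h: "2 * s = u + v"
  then have "s = (u + v) / 2" by simp
  then have eq: "(u - a)^2 + (v - a)^2 - 2 * (s - a)^2 = (u - v)^2 / 2"
    unfolding \<open>s = (u + v) / 2\<close> by (simp add: power2_eq_square field_simps)
  have nn: "(u - v)^2 / 2 \<ge> 0" by simp
  have "0 \<le> (u - a)^2 + (v - a)^2 - 2 * (s - a)^2" by (simp only: eq) (rule nn)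
  then show ?thesis by (simp only: diff_ge_0_iff_ge)
qed

lemma avg_sum: "avg (\<lambda>\<sigma>. \<Sum>j\<in>J. g j \<sigma>) \<rho> n = (\<Sum>j\<in>J. avg (g j) \<rho> n)"
proof (induction n arbitrary: \<rho>)
  case (Suc n)
  show ?case by (simp only: avg.simps Suc.IH sum.distrib[symmetric] sum_divide_distrib)
qed simp

lemma avg_mart: "(\<And>\<rho>. 2 * g \<rho> = g (\<rho> @ [False]) + g (\<rho> @ [True])) \<Longrightarrow> avg g \<rho> n = g \<rho>"
proof (induction n arbitrary: \<rho>)
  case 0 then show ?case by simp
next
  case (Suc n)
  have "avg g (\<rho> @ [False]) n = g (\<rho> @ [False])" "avg g (\<rho> @ [True]) n = g (\<rho> @ [True])"
    by (rule Suc.IH, rule Suc.prems)+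
  then have "avg g \<rho> (Suc n) = (g (\<rho> @ [False]) + g (\<rho> @ [True])) / 2" by (simp only: avg.simps)
  also have "\<dots> = g \<rho>" by (simp only: Suc.prems[of \<rho>, symmetric])
  finally show ?case .
qed

lemma avg_subm: assumes sub: "\<And>\<rho>. 2 * g \<rho> \<le> g (\<rho> @ [False]) + g (\<rho> @ [True])"
  shows "avg g \<rho> n \<le> avg g \<rho> (Suc n)"
proof (induction n arbitrary: \<rho>)
  case 0 then show ?case using sub[of \<rho>] by simp
next
  case (Suc n)
  have "avg g (\<rho> @ [False]) n \<le> avg g (\<rho> @ [False]) (Suc n)" "avg g (\<rho> @ [True]) n \<le> avg g (\<rho> @ [True]) (Suc n)"
    by (rule Suc.IH)+
  have "(avg g (\<rho> @ [False]) n + avg g (\<rho> @ [True]) n) / 2 \<le> (avg g (\<rho> @ [False]) (Suc n) + avg g (\<rho> @ [True]) (Suc n)) / 2"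
    by (rule divide_right_mono[OF add_mono[OF Suc.IH Suc.IH]]) simp
  then show ?case by (simp only: avg.simps(2)[of g \<rho> n] avg.simps(2)[of g \<rho> "Suc n"])
qed

lemma avg_sq: "(avg g \<rho> n)^2 \<le> avg (\<lambda>\<sigma>. (g \<sigma>)^2) \<rho> n"
proof (induction n arbitrary: \<rho>)
  case 0 then show ?case by simp
next
  case (Suc n)
  define a where "a = avg g (\<rho> @ [False]) n"
  define b where "b = avg g (\<rho> @ [True]) n"
  have 1: "a^2 \<le> avg (\<lambda>\<sigma>. (g \<sigma>)^2) (\<rho> @ [False]) n" "b^2 \<le> avg (\<lambda>\<sigma>. (g \<sigma>)^2) (\<rho> @ [True]) n"
    unfolding a_def b_def by (rule Suc.IH)+
  have 2: "((a+b)/2)^2 \<le> (a^2+b^2)/2"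
  proof -
    have eq: "(a^2+b^2)/2 - ((a+b)/2)^2 = (a-b)^2/4" by (simp add: power2_eq_square field_simps)
    have nn: "(a-b)^2/4 \<ge> 0" by simp
    have "0 \<le> (a^2+b^2)/2 - ((a+b)/2)^2" by (simp only: eq) (rule nn)
    then show ?thesis by (simp only: diff_ge_0_iff_ge)
  qed
  have 3: "(a^2+b^2)/2 \<le> (avg (\<lambda>\<sigma>. (g \<sigma>)^2) (\<rho> @ [False]) n + avg (\<lambda>\<sigma>. (g \<sigma>)^2) (\<rho> @ [True]) n) / 2"
    by (rule divide_right_mono[OF add_mono[OF 1]]) simp
  have e1: "avg g \<rho> (Suc n) = (a + b) / 2" by (simp only: avg.simps a_def b_def)
  have e2: "avg (\<lambda>\<sigma>. (g \<sigma>)^2) \<rho> (Suc n) = (avg (\<lambda>\<sigma>. (g \<sigma>)^2) (\<rho> @ [False]) n + avg (\<lambda>\<sigma>. (g \<sigma>)^2) (\<rho> @ [True]) n) / 2"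
    by (simp only: avg.simps)
  show ?case unfolding e1 e2 using 2 3 by (rule order_trans)
qed

lemma len_Suc_split: "{\<tau>::bool list. length \<tau> = Suc n} =
   Cons False ` {\<tau>. length \<tau> = n} \<union> Cons True ` {\<tau>. length \<tau> = n}"
proof (rule set_eqI)
  fix x :: "bool list"
  show "x \<in> {\<tau>. length \<tau> = Suc n} \<longleftrightarrow> x \<in> Cons False ` {\<tau>. length \<tau> = n} \<union> Cons True ` {\<tau>. length \<tau> = n}"
    by (cases x) (auto simp: image_iff)
qed

lemma fin_len: "finite {\<tau>::bool list. length \<tau> = n}"
  using finite_lists_length_eq[of "UNIV::bool set" n] by simp

lemma hdiv: "((a::real) / p + b / p) / 2 = (a + b) / (2 * p)"
  by (cases "p = 0") (simp_all add: field_simps)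

lemma avg_setsum: "avg g \<rho> n = (\<Sum>\<tau>\<in>{\<tau>. length \<tau> = n}. g (\<rho> @ \<tau>)) / 2 ^ n"
proof (induction n arbitrary: \<rho>)
  case 0 then show ?case by simp
next
  case (Suc n)
  let ?X = "{\<tau>::bool list. length \<tau> = n}"
  have d: "Cons False ` ?X \<inter> Cons True ` ?X = {}" by auto
  have "(\<Sum>\<tau>\<in>{\<tau>. length \<tau> = Suc n}. g (\<rho> @ \<tau>)) =
        (\<Sum>\<tau>\<in>Cons False ` ?X. g (\<rho> @ \<tau>)) + (\<Sum>\<tau>\<in>Cons True ` ?X. g (\<rho> @ \<tau>))"
    unfolding len_Suc_split by (rule sum.union_disjoint) (use fin_len d in auto)
  also have "\<dots> = (\<Sum>\<tau>\<in>?X. g ((\<rho> @ [False]) @ \<tau>)) + (\<Sum>\<tau>\<in>?X. g ((\<rho> @ [True]) @ \<tau>))"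
    by (simp add: sum.reindex)
  finally have e: "(\<Sum>\<tau>\<in>{\<tau>. length \<tau> = Suc n}. g (\<rho> @ \<tau>)) = (\<Sum>\<tau>\<in>?X. g ((\<rho> @ [False]) @ \<tau>)) + (\<Sum>\<tau>\<in>?X. g ((\<rho> @ [True]) @ \<tau>))" .
  have f1: "avg g (\<rho> @ [False]) n = (\<Sum>\<tau>\<in>?X. g ((\<rho> @ [False]) @ \<tau>)) / 2 ^ n" by (rule Suc.IH)
  have f2: "avg g (\<rho> @ [True]) n = (\<Sum>\<tau>\<in>?X. g ((\<rho> @ [True]) @ \<tau>)) / 2 ^ n" by (rule Suc.IH)
  have "avg g \<rho> (Suc n) = ((\<Sum>\<tau>\<in>?X. g ((\<rho> @ [False]) @ \<tau>)) / 2 ^ n + (\<Sum>\<tau>\<in>?X. g ((\<rho> @ [True]) @ \<tau>)) / 2 ^ n) / 2"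
    by (simp only: avg.simps(2) f1 f2)
  also have "\<dots> = ((\<Sum>\<tau>\<in>?X. g ((\<rho> @ [False]) @ \<tau>)) + (\<Sum>\<tau>\<in>?X. g ((\<rho> @ [True]) @ \<tau>))) / (2 * 2 ^ n)"
    by (rule hdiv)
  also have "\<dots> = (\<Sum>\<tau>\<in>{\<tau>. length \<tau> = Suc n}. g (\<rho> @ \<tau>)) / 2 ^ Suc n"
    by (simp only: e power_Suc)
  finally show ?case .
qed

lemma ar1: assumes "(l::real) \<le> b" "b < c" shows "l + (c - b) / 2 < c"
proof -
  have eq: "c - (l + (c - b) / 2) = (c - b) / 2 + (b - l)" by (simp add: field_simps)
  have p1: "0 < (c - b) / 2" using assms(2) by (intro divide_pos_pos) simp_all
  have p2: "0 \<le> b - l" using assms(1) by simp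
  have "0 < c - (l + (c - b) / 2)" unfolding eq by (rule add_pos_nonneg[OF p1 p2])
  then show ?thesis by (simp only: diff_gt_0_iff_gt)
qed

theorem lemma3p8:
  fixes S :: "nat \<Rightarrow> bool list \<Rightarrow> real" and k :: nat and c :: real
  assumes "k > 0"
    and "\<And>j. j < k \<Longrightarrow> martingale (S j)"
    and "\<And>j. j < k \<Longrightarrow> convergent (var_seq (S j) [])"
    and "c > Max {S j [] | j. j < k} + (1/2) * (\<Sum>j<k. sqrt (Var (S j) []))"
  shows "\<exists>S'. martingale S' \<and> S' [] < c
           \<and> (\<forall>\<rho>. S' \<rho> > Max {S j \<rho> | j. j < k})
           \<and> ((\<forall>j<k. bounded (range (S j))) \<longrightarrow> bounded (range S'))"
proof -
  define f where "f = (\<lambda>\<rho>. Max {S j \<rho> | j. j < k})"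
  have seteq: "\<And>\<rho>. {S j \<rho> | j. j < k} = (\<lambda>j. S j \<rho>) ` {..<k}" by auto
  have fin: "\<And>\<rho>. finite {S j \<rho> | j. j < k}" unfolding seteq by simp
  have ne: "\<And>\<rho>. {S j \<rho> | j. j < k} \<noteq> {}" using assms(1) unfolding seteq by auto
  have f_ge: "\<And>j \<rho>. j < k \<Longrightarrow> S j \<rho> \<le> f \<rho>" unfolding f_def using fin by (intro Max_ge) auto
  have f_ex: "\<exists>j<k. f \<rho> = S j \<rho>" for \<rho>
  proof -
    have "f \<rho> \<in> {S j \<rho> | j. j < k}" unfolding f_def using fin ne by (rule Max_in)
    then show ?thesis by auto
  qed
  have mart: "\<And>j \<rho>. j < k \<Longrightarrow> 2 * S j \<rho> = S j (\<rho> @ [False]) + S j (\<rho> @ [True])"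
    and nonneg: "\<And>j \<rho>. j < k \<Longrightarrow> S j \<rho> \<ge> 0" using assms(2) unfolding martingale_def by auto
  have f_nonneg: "f \<rho> \<ge> 0" for \<rho> using f_ge[of 0 \<rho>] nonneg[of 0 \<rho>] assms(1) by linarith
  have f_sub: "2 * f \<rho> \<le> f (\<rho> @ [False]) + f (\<rho> @ [True])" for \<rho>
  proof -
    obtain j where j: "j < k" "f \<rho> = S j \<rho>" using f_ex by blast
    show ?thesis using j mart[of j \<rho>] f_ge[of j "\<rho> @ [False]"] f_ge[of j "\<rho> @ [True]"] by linarith
  qed
  have f_le_sum: "f \<rho> \<le> (\<Sum>j<k. S j \<rho>)" for \<rho>
  proof -
    obtain j where j: "j < k" "f \<rho> = S j \<rho>" using f_ex by blast
    have "S j \<rho> \<le> (\<Sum>j<k. S j \<rho>)" by (rule member_le_sum) (use j nonneg in auto)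
    then show ?thesis using j by simp
  qed
  define L where "L \<rho> = lim (avg f \<rho>)" for \<rho>
  have inc: "incseq (avg f \<rho>)" for \<rho> by (rule incseq_SucI) (rule avg_subm[OF f_sub])
  have ub: "avg f \<rho> n \<le> (\<Sum>j<k. S j \<rho>)" for \<rho> n
  proof -
    have "avg f \<rho> n \<le> avg (\<lambda>\<sigma>. \<Sum>j<k. S j \<sigma>) \<rho> n" by (rule avg_mono[OF f_le_sum])
    also have "\<dots> = (\<Sum>j<k. avg (S j) \<rho> n)" by (rule avg_sum)
    also have "\<dots> = (\<Sum>j<k. S j \<rho>)" by (rule sum.cong) (auto intro: avg_mart mart)
    finally show ?thesis .
  qed
  have conv: "avg f \<rho> \<longlonglongrightarrow> L \<rho>" for \<rho>
  proof -
    obtain L' where "avg f \<rho> \<longlonglongrightarrow> L'" using incseq_convergent[OF inc[of \<rho>], of "\<Sum>j<k. S j \<rho>"] ub by blast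
    then have "lim (avg f \<rho>) = L'" by (rule limI)
    with \<open>avg f \<rho> \<longlonglongrightarrow> L'\<close> show ?thesis unfolding L_def by simp
  qed
  have Lmart: "2 * L \<rho> = L (\<rho> @ [False]) + L (\<rho> @ [True])" for \<rho>
  proof -
    have "(\<lambda>n. avg f \<rho> (Suc n)) \<longlonglongrightarrow> L \<rho>" using conv LIMSEQ_Suc by blast
    moreover have "(\<lambda>n. avg f \<rho> (Suc n)) \<longlonglongrightarrow> (L (\<rho> @ [False]) + L (\<rho> @ [True])) / 2"
    proof -
      have h: "(\<lambda>n. avg f (\<rho> @ [False]) n + avg f (\<rho> @ [True]) n) \<longlonglongrightarrow> L (\<rho> @ [False]) + L (\<rho> @ [True])"
        by (rule tendsto_add[OF conv conv])
      have "(\<lambda>n. (avg f (\<rho> @ [False]) n + avg f (\<rho> @ [True]) n) / 2) \<longlonglongrightarrow> (L (\<rho> @ [False]) + L (\<rho> @ [True])) / 2"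
        by (rule tendsto_divide[OF h tendsto_const]) simp
      then show ?thesis by (simp only: avg.simps)
    qed
    ultimately have "L \<rho> = (L (\<rho> @ [False]) + L (\<rho> @ [True])) / 2" by (rule LIMSEQ_unique)
    then show ?thesis by simp
  qed
  have L_ge: "f \<rho> \<le> L \<rho>" for \<rho> using incseq_le[OF inc conv, of \<rho> 0] by simp
  have L_le: "L \<rho> \<le> (\<Sum>j<k. S j \<rho>)" for \<rho> by (rule LIMSEQ_le_const2[OF conv], rule exI[of _ 0], intro allI impI ub)
  define V where "V = (1/2) * (\<Sum>j<k. sqrt (Var (S j) []))"
  define x where "x j \<sigma> = S j \<sigma> - S j []" for j \<sigma>
  define p where "p j \<sigma> = (x j \<sigma> + \<bar>x j \<sigma>\<bar>) / 2" for j \<sigma>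
  have p_nn: "p j \<sigma> \<ge> 0" for j \<sigma> by (auto simp: p_def abs_if)
  have fb: "f \<sigma> \<le> f [] + (\<Sum>j<k. p j \<sigma>)" for \<sigma>
  proof -
    obtain j where j: "j < k" "f \<sigma> = S j \<sigma>" using f_ex by blast
    have "p j \<sigma> \<le> (\<Sum>j<k. p j \<sigma>)" by (rule member_le_sum) (use j p_nn in auto)
    moreover have "x j \<sigma> \<le> p j \<sigma>" by (auto simp: p_def abs_if)
    moreover have "S j [] \<le> f []" using f_ge j by blast
    ultimately show ?thesis using j by (simp add: x_def)
  qed
  have pb: "avg (p j) [] n \<le> sqrt (Var (S j) []) / 2" if j: "j < k" for j n
  proof -
    have x0: "avg (x j) [] n = 0"
      unfolding x_def avg_diff avg_const using avg_mart[of "S j", OF mart[OF j]] by simp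
    have pe: "avg (p j) [] n = (avg (x j) [] n + avg (\<lambda>\<sigma>. \<bar>x j \<sigma>\<bar>) [] n) / 2"
      unfolding p_def avg_divide avg_add by simp
    have "(avg (\<lambda>\<sigma>. \<bar>x j \<sigma>\<bar>) [] n)^2 \<le> avg (\<lambda>\<sigma>. \<bar>x j \<sigma>\<bar>^2) [] n" by (rule avg_sq)
    then have a1: "avg (\<lambda>\<sigma>. \<bar>x j \<sigma>\<bar>) [] n \<le> sqrt (avg (\<lambda>\<sigma>. (x j \<sigma>)^2) [] n)"
      by (simp add: real_le_rsqrt)
    have vs: "var_seq (S j) [] = avg (\<lambda>\<sigma>. (x j \<sigma>)^2) []"
      by (rule ext) (simp add: var_seq_def avg_setsum x_def)
    have incV: "incseq (avg (\<lambda>\<sigma>. (x j \<sigma>)^2) [])"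
      by (rule incseq_SucI, rule avg_subm) (unfold x_def, rule sq_sub, rule mart[OF j])
    have cV: "avg (\<lambda>\<sigma>. (x j \<sigma>)^2) [] \<longlonglongrightarrow> Var (S j) []"
      using assms(3)[OF j] unfolding Var_def vs by (simp add: convergent_LIMSEQ_iff)
    have "avg (\<lambda>\<sigma>. (x j \<sigma>)^2) [] n \<le> Var (S j) []" by (rule incseq_le[OF incV cV])
    then have "sqrt (avg (\<lambda>\<sigma>. (x j \<sigma>)^2) [] n) \<le> sqrt (Var (S j) [])" by simp
    then have a2: "sqrt (avg (\<lambda>\<sigma>. (x j \<sigma>)^2) [] n) / 2 \<le> sqrt (Var (S j) []) / 2" by simp
    have "avg (p j) [] n = avg (\<lambda>\<sigma>. \<bar>x j \<sigma>\<bar>) [] n / 2" using pe x0 by simp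
    also have "\<dots> \<le> sqrt (avg (\<lambda>\<sigma>. (x j \<sigma>)^2) [] n) / 2" using a1 by simp
    finally show ?thesis using a2 by (rule order_trans)
  qed
  have bnd: "avg f [] n \<le> f [] + V" for n
  proof -
    have "avg f [] n \<le> avg (\<lambda>\<sigma>. f [] + (\<Sum>j<k. p j \<sigma>)) [] n" by (rule avg_mono[OF fb])
    also have "\<dots> = f [] + (\<Sum>j<k. avg (p j) [] n)" by (simp add: avg_add avg_const avg_sum)
    also have "\<dots> \<le> f [] + (\<Sum>j<k. sqrt (Var (S j) []) / 2)"
      by (intro add_left_mono sum_mono pb) simp
    also have "\<dots> = f [] + V" by (simp add: V_def sum_divide_distrib)
    finally show ?thesis .
  qed
  have L0: "L [] \<le> f [] + V" by (rule LIMSEQ_le_const2[OF conv], rule exI[of _ 0], intro allI impI bnd)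
  have cgt: "c > f [] + V" using assms(4) unfolding f_def V_def by simp
  define e where "e = (c - (f [] + V)) / 2"
  have epos: "e > 0" using cgt by (simp add: e_def)
  define S' where "S' \<rho> = L \<rho> + e" for \<rho>
  have m: "martingale S'" unfolding martingale_def S'_def
  proof (intro conjI allI)
    fix \<rho> show "0 \<le> L \<rho> + e" using L_ge[of \<rho>] f_nonneg[of \<rho>] epos by linarith
  next
    fix \<rho> show "2 * (L \<rho> + e) = L (\<rho> @ [False]) + e + (L (\<rho> @ [True]) + e)"
      using Lmart[of \<rho>] by (simp add: algebra_simps)
  qed
  have s0: "S' [] < c" unfolding S'_def e_def by (rule ar1[OF L0 cgt])
  have dom: "\<forall>\<rho>. S' \<rho> > Max {S j \<rho> | j. j < k}"
  proof
    fix \<rho>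
    have "f \<rho> < S' \<rho>" using L_ge[of \<rho>] epos by (simp add: S'_def)
    then show "S' \<rho> > Max {S j \<rho> | j. j < k}" unfolding f_def .
  qed
  have bd: "(\<forall>j<k. bounded (range (S j))) \<longrightarrow> bounded (range S')"
  proof
    assume hb: "\<forall>j<k. bounded (range (S j))"
    have "\<forall>j\<in>{..<k}. \<exists>B. \<forall>\<rho>. \<bar>S j \<rho>\<bar> \<le> B"
    proof
      fix j assume "j \<in> {..<k}"
      then have "bounded (range (S j))" using hb by simp
      then obtain a where a: "\<And>y. y \<in> range (S j) \<Longrightarrow> norm y \<le> a" unfolding bounded_iff by blast
      show "\<exists>B. \<forall>\<rho>. \<bar>S j \<rho>\<bar> \<le> B"
      proof (intro exI allI)
        fix \<rho> show "\<bar>S j \<rho>\<bar> \<le> a" using a[of "S j \<rho>"] by simp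
      qed
    qed
    then have "\<exists>B. \<forall>j\<in>{..<k}. \<forall>\<rho>. \<bar>S j \<rho>\<bar> \<le> B j" by (rule bchoice)
    then obtain B where B0: "\<forall>j\<in>{..<k}. \<forall>\<rho>. \<bar>S j \<rho>\<bar> \<le> B j" by (elim exE)
    have B: "\<And>j \<rho>. j \<in> {..<k} \<Longrightarrow> \<bar>S j \<rho>\<bar> \<le> B j" using B0 by blast
    show "bounded (range S')"
      unfolding bounded_iff
    proof (intro exI ballI)
      fix y assume "y \<in> range S'"
      then obtain \<rho> where y: "y = S' \<rho>" by auto
      have "(\<Sum>j<k. S j \<rho>) \<le> (\<Sum>j<k. B j)" by (rule sum_mono) (rule order_trans[OF abs_ge_self B])
      moreover have "L \<rho> \<ge> 0" using L_ge[of \<rho>] f_nonneg[of \<rho>] by linarith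
      moreover have "norm y = L \<rho> + e" using y \<open>L \<rho> \<ge> 0\<close> epos by (simp add: S'_def)
      ultimately show "norm y \<le> (\<Sum>j<k. B j) + e" using L_le[of \<rho>] by linarith
    qed
  qed
  show ?thesis by (intro exI[of _ S'] conjI m s0 dom bd)
qed

end
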